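(* Let $(k,\nu)$ be a valued field with value group contained in $\mathbb{Z}$, let $V$ be a $k$-vector space of finite dimension $r$ with a value function $\operatorname{val}\colon V\to\mathbb{Z}\cup\{\infty\}$, and let $x\in k$ with $\nu(x)=1$. Assume that the completion $V_\nu$ of $V$ has dimension $r$ over the completion $k_\nu$ of $k$. Consider the following procedure, applied to a $k$-basis $B_1,\dots,B_r$ of $V$: for $d=1,\dots,r$ in turn, first replace $B_d$ by $x^{-\operatorname{val}(B_d)}B_d$; then, as long as there exist $\alpha_1,\dots,\alpha_{d-1}\in k$ with $\operatorname{val}(\alpha_1B_1+\cdots+\alpha_{d-1}B_{d-1}+B_d)>0$, choose such $\alpha_1,\dots,\alpha_{d-1}$ and replace $B_d$ by $x^{-1}(\alpha_1B_1+\cdots+\alpha_{d-1}B_{d-1}+B_d)$. Finally return $B_1,\dots,B_r$. Then this procedure terminates (each of its while-loops performs only finitely many iterations, regardless of the choices of the $\alpha_i$).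
   Context: A valuation $\nu\colon k\to\mathbb{Z}\cup\{\infty\}$ on a field $k$ of characteristic zero satisfies $\nu(a)=\infty\iff a=0$, $\nu(ab)=\nu(a)+\nu(b)$, $\nu(a+b)\ge\min\{\nu(a),\nu(b)\}$. A value function $\operatorname{val}\colon V\to\mathbb{Z}\cup\{\infty\}$ on a $k$-vector space satisfies $\operatorname{val}(v)=\infty\iff v=0$, $\operatorname{val}(av)=\nu(a)+\operatorname{val}(v)$, $\operatorname{val}(v+w)\ge\min\{\operatorname{val}(v),\operatorname{val}(w)\}$. The $\nu$-adic absolute value $|a|=e^{-\nu(a)}$ defines a topology on $k$; $k_\nu$ denotes the completion of $k$ (Cauchy sequences modulo null sequences), with $\nu$ extended by continuity. $V$ carries the norm $\|v\|=e^{-\operatorname{val}(v)}$, and $V_\nu$ denotes the $k_\nu$-vector space obtained from $V$ by scalar extension, i.e. its completion with respect to this norm (for a basis $B_1,\dots,B_r$ of $V$, it is the $k_\nu$-span of $B_1,\dots,B_r$); in general $\dim_{k_\nu}V_\nu\le\dim_k V$. *)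

theory Defs
  imports Main "HOL.Vector_Spaces"
begin

text \<open>Conventions. Values in Z \<union> {\<infinity>} are represented by an int-valued function whose
value at 0 is irrelevant; "val v \<ge> M" in the extended sense is written ext_ge (true for v = 0).\<close>

definition ext_ge :: "('b::zero \<Rightarrow> int) \<Rightarrow> int \<Rightarrow> 'b \<Rightarrow> bool" where
  "ext_ge f M v \<longleftrightarrow> v = 0 \<or> M \<le> f v"

definition ext_pos :: "('b::zero \<Rightarrow> int) \<Rightarrow> 'b \<Rightarrow> bool" where
  "ext_pos f v \<longleftrightarrow> v = 0 \<or> 0 < f v"

definition is_valuation :: "('a::field \<Rightarrow> int) \<Rightarrow> bool" where
  "is_valuation \<nu> \<longleftrightarrow>
     (\<forall>a b. a \<noteq> 0 \<longrightarrow> b \<noteq> 0 \<longrightarrow> \<nu> (a * b) = \<nu> a + \<nu> b) \<and>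
     (\<forall>a b. a \<noteq> 0 \<longrightarrow> b \<noteq> 0 \<longrightarrow> a + b \<noteq> 0 \<longrightarrow> min (\<nu> a) (\<nu> b) \<le> \<nu> (a + b))"

definition is_value_function ::
  "('a::field \<Rightarrow> 'v::ab_group_add \<Rightarrow> 'v) \<Rightarrow> ('a \<Rightarrow> int) \<Rightarrow> ('v \<Rightarrow> int) \<Rightarrow> bool" where
  "is_value_function scale \<nu> val \<longleftrightarrow>
     (\<forall>a v. a \<noteq> 0 \<longrightarrow> v \<noteq> 0 \<longrightarrow> val (scale a v) = \<nu> a + val v) \<and>
     (\<forall>v w. v \<noteq> 0 \<longrightarrow> w \<noteq> 0 \<longrightarrow> v + w \<noteq> 0 \<longrightarrow> min (val v) (val w) \<le> val (v + w))"

definition cauchy_seq :: "('b::ab_group_add \<Rightarrow> int) \<Rightarrow> (nat \<Rightarrow> 'b) \<Rightarrow> bool" where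
  "cauchy_seq f c \<longleftrightarrow> (\<forall>M. \<exists>N. \<forall>m\<ge>N. \<forall>n\<ge>N. ext_ge f M (c m - c n))"

definition null_seq :: "('b::zero \<Rightarrow> int) \<Rightarrow> (nat \<Rightarrow> 'b) \<Rightarrow> bool" where
  "null_seq f c \<longleftrightarrow> (\<forall>M. \<exists>N. \<forall>n\<ge>N. ext_ge f M (c n))"

text \<open>dim_{k_nu} V_nu = r for V with basis B_1..B_r: V_nu is the k_nu-span of the classes
[B_1],...,[B_r] in the completion of V (Cauchy sequences modulo null sequences), and its
dimension is r iff these r classes are k_nu-linearly independent, i.e. a k_nu-linear
combination (classes of Cauchy sequences c_i in k) giving the zero class (a null sequence in V)
has all coefficients zero (null sequences in k).\<close>
definition completion_full_dim ::
  "('a::field \<Rightarrow> 'v::ab_group_add \<Rightarrow> 'v) \<Rightarrow> ('a \<Rightarrow> int) \<Rightarrow> ('v \<Rightarrow> int) \<Rightarrow> nat \<Rightarrow> (nat \<Rightarrow> 'v) \<Rightarrow> bool" where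
  "completion_full_dim scale \<nu> val r B \<longleftrightarrow>
     (\<forall>c :: nat \<Rightarrow> nat \<Rightarrow> 'a.
        (\<forall>i\<in>{1..r}. cauchy_seq \<nu> (c i)) \<longrightarrow>
        null_seq val (\<lambda>n. \<Sum>i\<in>{1..r}. scale (c i n) (B i)) \<longrightarrow>
        (\<forall>i\<in>{1..r}. null_seq \<nu> (c i)))"

text \<open>The procedure, as a nondeterministic transition system on states (d, B).\<close>
definition comb :: "('a \<Rightarrow> 'v::ab_group_add \<Rightarrow> 'v) \<Rightarrow> (nat \<Rightarrow> 'v) \<Rightarrow> nat \<Rightarrow> (nat \<Rightarrow> 'a) \<Rightarrow> 'v" where
  "comb scale B d \<alpha> = (\<Sum>i\<in>{1..<d}. scale (\<alpha> i) (B i)) + B d"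

definition loop_guard ::
  "('a \<Rightarrow> 'v::ab_group_add \<Rightarrow> 'v) \<Rightarrow> ('v \<Rightarrow> int) \<Rightarrow> (nat \<Rightarrow> 'v) \<Rightarrow> nat \<Rightarrow> bool" where
  "loop_guard scale val B d \<longleftrightarrow> (\<exists>\<alpha>. ext_pos val (comb scale B d \<alpha>))"

definition normalize ::
  "('a::field \<Rightarrow> 'v::ab_group_add \<Rightarrow> 'v) \<Rightarrow> ('v \<Rightarrow> int) \<Rightarrow> 'a \<Rightarrow> (nat \<Rightarrow> 'v) \<Rightarrow> nat \<Rightarrow> (nat \<Rightarrow> 'v)" where
  "normalize scale val x B d = B(d := scale (x powi (- val (B d))) (B d))"

definition init_state ::
  "('a::field \<Rightarrow> 'v::ab_group_add \<Rightarrow> 'v) \<Rightarrow> ('v \<Rightarrow> int) \<Rightarrow> 'a \<Rightarrow> (nat \<Rightarrow> 'v) \<Rightarrow> nat \<times> (nat \<Rightarrow> 'v)" where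
  "init_state scale val x B = (1, normalize scale val x B 1)"

definition proc_step ::
  "('a::field \<Rightarrow> 'v::ab_group_add \<Rightarrow> 'v) \<Rightarrow> ('v \<Rightarrow> int) \<Rightarrow> 'a \<Rightarrow> nat \<Rightarrow>
   nat \<times> (nat \<Rightarrow> 'v) \<Rightarrow> nat \<times> (nat \<Rightarrow> 'v) \<Rightarrow> bool" where
  "proc_step scale val x r s s' \<longleftrightarrow>
     (let (d, B) = s; (d', B') = s' in
       (1 \<le> d \<and> d \<le> r \<and> d' = d \<and>
          (\<exists>\<alpha>. ext_pos val (comb scale B d \<alpha>) \<and>
                B' = B(d := scale (inverse x) (comb scale B d \<alpha>)))) \<or>
       (1 \<le> d \<and> d < r \<and> \<not> loop_guard scale val B d \<and> d' = d + 1 \<and>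
          B' = normalize scale val x B (d + 1)))"

end

theory Submission
  imports Defs
begin

lemma ext_ge_zero[simp]: "ext_ge f M 0"
  by (simp add: ext_ge_def)

lemma ext_ge_mono: "M' \<le> M \<Longrightarrow> ext_ge f M v \<Longrightarrow> ext_ge f M' v"
  by (auto simp: ext_ge_def)

lemma ext_pos_iff: "ext_pos f v \<longleftrightarrow> ext_ge f 1 v"
  by (auto simp: ext_pos_def ext_ge_def)

lemma ext_ge_add:
  fixes f :: "'b::ab_group_add \<Rightarrow> int"
  assumes U: "\<And>v w. v \<noteq> 0 \<Longrightarrow> w \<noteq> 0 \<Longrightarrow> v + w \<noteq> 0 \<Longrightarrow> min (f v) (f w) \<le> f (v + w)"
    and "ext_ge f M v" "ext_ge f M w"
  shows "ext_ge f M (v + w)"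
proof (cases "v = 0 \<or> w = 0 \<or> v + w = 0")
  case True then show ?thesis using assms(2,3) by (auto simp: ext_ge_def)
next
  case False then show ?thesis using U[of v w] assms(2,3) by (auto simp: ext_ge_def)
qed

lemma ext_ge_sum:
  fixes f :: "'b::ab_group_add \<Rightarrow> int"
  assumes U: "\<And>v w. v \<noteq> 0 \<Longrightarrow> w \<noteq> 0 \<Longrightarrow> v + w \<noteq> 0 \<Longrightarrow> min (f v) (f w) \<le> f (v + w)"
    and "\<And>i. i \<in> S \<Longrightarrow> ext_ge f M (g i)"
  shows "ext_ge f M (sum g S)"
  using assms(2)
proof (induction S rule: infinite_finite_induct)
  case (insert i S) then show ?case by (simp add: ext_ge_add[OF U])
qed auto

lemma cauchy_from_steps:
  fixes f :: "'b::ab_group_add \<Rightarrow> int"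
  assumes U: "\<And>v w. v \<noteq> 0 \<Longrightarrow> w \<noteq> 0 \<Longrightarrow> v + w \<noteq> 0 \<Longrightarrow> min (f v) (f w) \<le> f (v + w)"
    and N: "\<And>v M. ext_ge f M v \<Longrightarrow> ext_ge f M (- v)"
    and S: "\<And>n. ext_ge f (int n + K) (c (Suc n) - c n)"
  shows "cauchy_seq f c"
proof -
  have A: "ext_ge f (int n + K) (c m - c n)" if "n \<le> m" for n m
    using that
  proof (induction m)
    case 0 then show ?case by simp
  next
    case (Suc m)
    show ?case
    proof (cases "n = Suc m")
      case True then show ?thesis by simp
    next
      case False
      then have "n \<le> m" using Suc.prems by simp
      have e: "c (Suc m) - c n = (c (Suc m) - c m) + (c m - c n)" by simp
      have "ext_ge f (int n + K) (c (Suc m) - c m)"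
        using S[of m] ext_ge_mono[of "int n + K" "int m + K"] \<open>n \<le> m\<close> by simp
      moreover have "ext_ge f (int n + K) (c m - c n)" using Suc.IH \<open>n \<le> m\<close> by simp
      ultimately show ?thesis unfolding e using ext_ge_add[OF U] by blast
    qed
  qed
  show ?thesis unfolding cauchy_seq_def
  proof
    fix M
    show "\<exists>N. \<forall>m\<ge>N. \<forall>n\<ge>N. ext_ge f M (c m - c n)"
    proof (intro exI allI impI)
      fix m n assume mn: "nat (M - K) \<le> m" "nat (M - K) \<le> n"
      have Mm: "M \<le> int m + K" "M \<le> int n + K" using mn by linarith+
      show "ext_ge f M (c m - c n)"
      proof (cases "n \<le> m")
        case True then show ?thesis using A[of n m] ext_ge_mono[of M "int n + K"] Mm by simp
      next
        case False
        then have "ext_ge f (int m + K) (c n - c m)" using A by simp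
        then have "ext_ge f (int m + K) (-(c n - c m))" by (rule N)
        then show ?thesis using ext_ge_mono[of M "int m + K"] Mm by simp
      qed
    qed
  qed
qed


locale setting = vector_space +
  fixes \<nu> :: "'a \<Rightarrow> int" and val :: "'b \<Rightarrow> int" and r :: nat and B0 :: "nat \<Rightarrow> 'b" and x :: 'a
  assumes valuation: "is_valuation \<nu>" and vf: "is_value_function scale \<nu> val"
    and injB: "inj_on B0 {1..r}" and indep: "\<not> dependent (B0 ` {1..r})"
    and spanB: "span (B0 ` {1..r}) = UNIV" and x0: "x \<noteq> 0" and nux: "\<nu> x = 1"
    and full: "completion_full_dim scale \<nu> val r B0"
begin

lemma nu_mult: "a \<noteq> 0 \<Longrightarrow> b \<noteq> 0 \<Longrightarrow> \<nu> (a * b) = \<nu> a + \<nu> b"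
  using valuation by (simp add: is_valuation_def)

lemma nu_ultra: "a \<noteq> 0 \<Longrightarrow> b \<noteq> 0 \<Longrightarrow> a + b \<noteq> 0 \<Longrightarrow> min (\<nu> a) (\<nu> b) \<le> \<nu> (a + b)"
  using valuation by (simp add: is_valuation_def)

lemma val_scale: "a \<noteq> 0 \<Longrightarrow> v \<noteq> 0 \<Longrightarrow> val (a *s v) = \<nu> a + val v"
  using vf by (simp add: is_value_function_def)

lemma val_ultra: "v \<noteq> 0 \<Longrightarrow> w \<noteq> 0 \<Longrightarrow> v + w \<noteq> 0 \<Longrightarrow> min (val v) (val w) \<le> val (v + w)"
  using vf by (simp add: is_value_function_def)

lemma nu_one: "\<nu> 1 = 0"
  using nu_mult[of 1 1] by simp

lemma nu_neg1: "\<nu> (-1) = 0"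
  using nu_mult[of "-1" "-1"] nu_one by simp

lemma nu_inverse: "a \<noteq> 0 \<Longrightarrow> \<nu> (inverse a) = - \<nu> a"
  using nu_mult[of a "inverse a"] nu_one by simp

lemma nu_power: "\<nu> (x ^ n) = int n"
  by (induction n) (simp_all add: nu_one nu_mult x0 nux)

lemma nu_powi: "\<nu> (x powi k) = k"
proof (cases "k \<ge> 0")
  case True
  then have "k = int (nat k)" by simp
  then show ?thesis by (metis power_int_of_nat nu_power)
next
  case False
  then have "k = - int (nat (-k))" by simp
  then have "x powi k = inverse (x ^ nat (-k))" by (metis power_int_minus power_int_of_nat)
  then show ?thesis using nu_inverse[of "x ^ nat (-k)"] nu_power x0 False by simp
qed

lemma ext_ge_mult: "ext_ge \<nu> a s \<Longrightarrow> ext_ge \<nu> b t \<Longrightarrow> ext_ge \<nu> (a + b) (s * t)"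
  unfolding ext_ge_def by (cases "s = 0"; cases "t = 0") (auto simp: nu_mult)

lemma ext_ge_scale: "ext_ge \<nu> a s \<Longrightarrow> ext_ge val b v \<Longrightarrow> ext_ge val (a + b) (s *s v)"
  unfolding ext_ge_def by (cases "s = 0"; cases "v = 0") (auto simp: val_scale)

lemma ext_ge_neg_val: "ext_ge val M v \<Longrightarrow> ext_ge val M (- v)"
proof -
  assume a: "ext_ge val M v"
  have "ext_ge \<nu> 0 (-1)" by (simp add: ext_ge_def nu_neg1)
  from ext_ge_scale[OF this a] have "ext_ge val M ((-1) *s v)" by simp
  then show ?thesis by (simp add: scale_minus_left)
qed

lemma ext_ge_neg_nu: "ext_ge \<nu> M a \<Longrightarrow> ext_ge \<nu> M (- a)"
proof -
  assume a: "ext_ge \<nu> M a"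
  have "ext_ge \<nu> 0 (-1)" by (simp add: ext_ge_def nu_neg1)
  from ext_ge_mult[OF this a] show ?thesis by simp
qed

lemma ext_ge_add_val: "ext_ge val M v \<Longrightarrow> ext_ge val M w \<Longrightarrow> ext_ge val M (v + w)"
  by (rule ext_ge_add[OF val_ultra])

lemma ext_ge_diff_val: "ext_ge val M v \<Longrightarrow> ext_ge val M w \<Longrightarrow> ext_ge val M (v - w)"
  using ext_ge_add_val[of M v "- w"] ext_ge_neg_val[of M w] by simp

lemma ext_ge_sum_val: "(\<And>i. i \<in> S \<Longrightarrow> ext_ge val M (g i)) \<Longrightarrow> ext_ge val M (sum g S)"
  by (rule ext_ge_sum[OF val_ultra])

lemma ext_ge_sum_nu: "(\<And>i. i \<in> S \<Longrightarrow> ext_ge \<nu> M (g i)) \<Longrightarrow> ext_ge \<nu> M (sum g S)"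
  by (rule ext_ge_sum[OF nu_ultra])

definition coord :: "nat \<Rightarrow> 'b \<Rightarrow> 'a" where
  "coord j v = representation (B0 ` {1..r}) v (B0 j)"

lemma indepB: "independent (B0 ` {1..r})"
  using indep by simp

lemma coord_add: "coord j (u + v) = coord j u + coord j v"
  using representation_add[OF indepB] spanB by (simp add: coord_def)

lemma coord_scale: "coord j (a *s v) = a * coord j v"
  using representation_scale[OF indepB] spanB by (simp add: coord_def)

lemma coord_diff: "coord j (u - v) = coord j u - coord j v"
  using representation_diff[OF indepB] spanB by (simp add: coord_def)

lemma coord_sum: "coord j (sum g S) = (\<Sum>i\<in>S. coord j (g i))"
  using representation_sum[OF indepB, of S g] spanB by (simp add: coord_def)

lemma coord_B0: "i \<in> {1..r} \<Longrightarrow> j \<in> {1..r} \<Longrightarrow> coord j (B0 i) = (if j = i then 1 else 0)"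
  using representation_basis[OF indepB, of "B0 i"] injB
  by (auto simp: coord_def inj_on_eq_iff)

lemma expand: "(\<Sum>j\<in>{1..r}. coord j v *s B0 j) = v"
proof -
  have "(\<Sum>b\<in>B0`{1..r}. representation (B0`{1..r}) v b *s b) = v"
    by (rule sum_representation_eq) (use indepB spanB in auto)
  then show ?thesis
    using sum.reindex[OF injB, of "\<lambda>b. representation (B0`{1..r}) v b *s b"] by (simp add: coord_def o_def)
qed

lemma coord_comb: "coord j (comb scale B d \<alpha>) = (\<Sum>i\<in>{1..<d}. \<alpha> i * coord j (B i)) + coord j (B d)"
  by (simp add: comb_def coord_add coord_sum coord_scale)

end


context setting
begin

lemma ortho:
  assumes gf: "\<forall>j\<in>{1..<d}. \<not> loop_guard scale val B j"
    and pos: "\<forall>j\<in>{1..<d}. ext_ge val 0 (B j)"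
    and eg: "ext_ge val M (\<Sum>i\<in>{1..<d}. a i *s B i)"
    and i1: "i1 \<in> {1..<d}"
  shows "ext_ge \<nu> M (a i1)"
proof (rule ccontr)
  assume neg: "\<not> ext_ge \<nu> M (a i1)"
  then have a1: "a i1 \<noteq> 0" "\<nu> (a i1) < M" by (auto simp: ext_ge_def)
  define S where "S = {i\<in>{1..<d}. a i \<noteq> 0}"
  have finS: "finite S" "S \<noteq> {}" "i1 \<in> S" using i1 a1 by (auto simp: S_def)
  define m where "m = Min ((\<lambda>i. \<nu> (a i)) ` S)"
  have m_le: "\<And>i. i \<in> S \<Longrightarrow> m \<le> \<nu> (a i)" by (simp add: m_def finS)
  have "m \<in> (\<lambda>i. \<nu> (a i)) ` S" using Min_in finS unfolding m_def by blast
  define T where "T = {i\<in>S. \<nu> (a i) = m}"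
  have finT: "finite T" "T \<noteq> {}" using finS \<open>m \<in> _\<close> by (auto simp: T_def)
  define j0 where "j0 = Max T"
  have j0T: "j0 \<in> T" using Max_in finT unfolding j0_def by blast
  have j0max: "m < \<nu> (a i)" if "i \<in> S" "j0 < i" for i
  proof -
    have "i \<notin> T" using that Max_ge[OF finT(1)] unfolding j0_def by force
    then show ?thesis using m_le[OF that(1)] that(1) by (auto simp: T_def)
  qed
  have j0: "j0 \<in> {1..<d}" "a j0 \<noteq> 0" "\<nu> (a j0) = m" using j0T by (auto simp: T_def S_def)
  define c0 where "c0 = inverse (a j0)"
  define \<beta> where "\<beta> i = c0 * a i" for i
  define u where "u = (\<Sum>i\<in>{1..<d}. a i *s B i)"
  define t where "t = (\<Sum>i\<in>{Suc j0..<d}. \<beta> i *s B i)"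
  have "c0 *s u = (\<Sum>i\<in>{1..<d}. \<beta> i *s B i)"
    by (simp add: u_def \<beta>_def scale_sum_right)
  also have "\<dots> = (\<Sum>i\<in>{1..<j0}. \<beta> i *s B i) + (\<Sum>i\<in>{j0..<d}. \<beta> i *s B i)"
    using j0(1) by (simp add: sum.atLeastLessThan_concat)
  also have "(\<Sum>i\<in>{j0..<d}. \<beta> i *s B i) = \<beta> j0 *s B j0 + t"
    using j0(1) by (simp add: t_def sum.atLeast_Suc_lessThan)
  also have "\<beta> j0 = 1" using j0 by (simp add: \<beta>_def c0_def)
  finally have split: "c0 *s u = comb scale B j0 \<beta> + t"
    by (simp add: comb_def add.assoc)
  have t_ge: "ext_ge val 1 t"
    unfolding t_def
  proof (rule ext_ge_sum_val)
    fix i assume i: "i \<in> {Suc j0..<d}"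
    show "ext_ge val 1 (\<beta> i *s B i)"
    proof (cases "a i = 0")
      case True then show ?thesis by (simp add: \<beta>_def)
    next
      case False
      then have "i \<in> S" using i j0 by (auto simp: S_def)
      then have "m < \<nu> (a i)" using j0max i by simp
      moreover have "\<nu> (\<beta> i) = - m + \<nu> (a i)"
        using False j0 by (simp add: \<beta>_def c0_def nu_mult nu_inverse)
      ultimately have "ext_ge \<nu> 1 (\<beta> i)" by (simp add: ext_ge_def)
      moreover have "ext_ge val 0 (B i)" using pos i j0 by auto
      ultimately show ?thesis using ext_ge_scale by fastforce
    qed
  qed
  have nc: "\<not> ext_pos val (comb scale B j0 \<beta>)" using gf j0 by (auto simp: loop_guard_def)
  have "\<not> ext_ge val 1 (c0 *s u)"
  proof
    assume "ext_ge val 1 (c0 *s u)"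
    then have "ext_ge val 1 (c0 *s u - t)" using t_ge ext_ge_diff_val by blast
    then show False using nc split by (simp add: ext_pos_iff)
  qed
  then have cu: "c0 *s u \<noteq> 0" "val (c0 *s u) < 1" by (auto simp: ext_ge_def)
  then have "u \<noteq> 0" by auto
  have "c0 \<noteq> 0" using j0 by (simp add: c0_def)
  have "val (c0 *s u) = - m + val u"
    using val_scale[OF \<open>c0 \<noteq> 0\<close> \<open>u \<noteq> 0\<close>] j0 by (simp add: c0_def nu_inverse)
  then have "val u \<le> m" using cu by simp
  moreover have "m \<le> \<nu> (a i1)" using m_le finS by simp
  moreover have "M \<le> val u" using eg \<open>u \<noteq> 0\<close> by (simp add: u_def ext_ge_def)
  ultimately show False using a1 by simp
qed

definition Inv :: "nat \<Rightarrow> (nat \<Rightarrow> 'b) \<Rightarrow> bool" where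
  "Inv d B \<longleftrightarrow> 1 \<le> d \<and> d \<le> r \<and> (\<forall>j\<in>{1..<d}. \<not> loop_guard scale val B j) \<and>
     (\<forall>j\<in>{1..d}. ext_ge val 0 (B j)) \<and>
     (\<forall>i\<in>{1..d}. \<forall>j. i < j \<longrightarrow> j \<le> r \<longrightarrow> coord j (B i) = 0) \<and>
     coord d (B d) \<noteq> 0 \<and> (\<forall>i. d < i \<longrightarrow> i \<le> r \<longrightarrow> B i = B0 i)"

lemma comb_cong:
  assumes "1 \<le> j" "\<And>i. i \<in> {1..j} \<Longrightarrow> B' i = B i"
  shows "comb scale B' j \<alpha> = comb scale B j \<alpha>"
proof -
  have "B' j = B j" using assms by auto
  moreover have "(\<Sum>i\<in>{1..<j}. \<alpha> i *s B' i) = (\<Sum>i\<in>{1..<j}. \<alpha> i *s B i)"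
    using assms by (intro sum.cong) auto
  ultimately show ?thesis by (simp add: comb_def)
qed

lemma guard_cong:
  assumes "1 \<le> j" "\<And>i. i \<in> {1..j} \<Longrightarrow> B' i = B i"
  shows "loop_guard scale val B' j = loop_guard scale val B j"
  unfolding loop_guard_def using comb_cong[OF assms] by simp

lemma norm_ext_ge: "ext_ge val 0 (x powi (- val v) *s v)"
proof (cases "v = 0")
  case False
  then show ?thesis using val_scale[of "x powi (- val v)" v] x0 by (simp add: ext_ge_def nu_powi)
qed simp

lemma Inv_init: "1 \<le> r \<Longrightarrow> Inv 1 (normalize scale val x B0 1)"
  unfolding Inv_def normalize_def
  using norm_ext_ge[of "B0 1"] x0 by (auto simp: coord_scale coord_B0)

lemma Inv_step:
  assumes I: "Inv d B" and st: "proc_step scale val x r (d, B) (d', B')"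
  shows "Inv d' B'"
proof -
  from st consider
    (loop) \<alpha> where "1 \<le> d" "d \<le> r" "d' = d" "ext_pos val (comb scale B d \<alpha>)"
        "B' = B(d := inverse x *s comb scale B d \<alpha>)"
  | (nxt) "1 \<le> d" "d < r" "\<not> loop_guard scale val B d" "d' = d + 1"
        "B' = normalize scale val x B (d + 1)"
    unfolding proc_step_def by auto
  then show ?thesis
  proof cases
    case loop
    have g: "\<forall>j\<in>{1..<d}. \<not> loop_guard scale val B' j"
    proof
      fix j assume j: "j \<in> {1..<d}"
      have "loop_guard scale val B' j = loop_guard scale val B j"
        by (rule guard_cong) (use j loop in auto)
      then show "\<not> loop_guard scale val B' j" using I j by (simp add: Inv_def)
    qed
    have "ext_ge \<nu> (-1) (inverse x)" using x0 by (simp add: ext_ge_def nu_inverse nux)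
    moreover have "ext_ge val 1 (comb scale B d \<alpha>)" using loop by (simp add: ext_pos_iff)
    ultimately have e: "ext_ge val 0 (B' d)" using loop ext_ge_scale by fastforce
    have cB': "coord j (B' d) = inverse x * ((\<Sum>i\<in>{1..<d}. \<alpha> i * coord j (B i)) + coord j (B d))" for j
      using loop by (simp add: coord_scale coord_comb)
    have tri: "coord j (B' d) = 0" if "d < j" "j \<le> r" for j
      using I that unfolding cB' Inv_def by auto
    have dd: "coord d (B' d) \<noteq> 0"
      using I x0 unfolding cB' Inv_def by auto
    show ?thesis using I loop g e tri dd unfolding Inv_def by auto
  next
    case nxt
    define c where "c = x powi (- val (B0 (d + 1)))"
    have Bd1: "B (d + 1) = B0 (d + 1)" using I nxt by (simp add: Inv_def)
    have B': "B' = B(d + 1 := c *s B0 (d + 1))" using nxt Bd1 by (simp add: normalize_def c_def)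
    have c0: "c \<noteq> 0" using x0 by (simp add: c_def)
    have g: "\<forall>j\<in>{1..<d+1}. \<not> loop_guard scale val B' j"
    proof
      fix j assume j: "j \<in> {1..<d+1}"
      have "loop_guard scale val B' j = loop_guard scale val B j"
        by (rule guard_cong) (use j B' in auto)
      then show "\<not> loop_guard scale val B' j" using I j nxt by (auto simp: Inv_def less_Suc_eq)
    qed
    have e: "ext_ge val 0 (B' (d + 1))" using norm_ext_ge B' by (simp add: c_def)
    have cB: "coord j (B' (d + 1)) = c * (if j = d + 1 then 1 else 0)" if "j \<in> {1..r}" for j
      using B' that nxt by (simp add: coord_scale coord_B0)
    have tri: "\<forall>i\<in>{1..d+1}. \<forall>j. i < j \<longrightarrow> j \<le> r \<longrightarrow> coord j (B' i) = 0"
    proof (intro ballI allI impI)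
      fix i j assume ij: "i \<in> {1..d+1}" "i < j" "j \<le> r"
      show "coord j (B' i) = 0"
      proof (cases "i = d + 1")
        case True then show ?thesis using cB[of j] ij by auto
      next
        case False then show ?thesis using I ij B' by (auto simp: Inv_def)
      qed
    qed
    have dd: "coord (d + 1) (B' (d + 1)) \<noteq> 0" using cB[of "d+1"] nxt c0 by simp
    have up: "\<forall>i. d + 1 < i \<longrightarrow> i \<le> r \<longrightarrow> B' i = B0 i" using I B' by (auto simp: Inv_def)
    have lo: "\<forall>j\<in>{1..d+1}. ext_ge val 0 (B' j)"
    proof
      fix j assume "j \<in> {1..d+1}"
      then show "ext_ge val 0 (B' j)" using I e B' by (cases "j = d + 1") (auto simp: Inv_def)
    qed
    show ?thesis using nxt g lo tri dd up unfolding Inv_def by auto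
  qed
qed

end


context setting
begin

lemma no_infinite_run:
  "\<not> (\<exists>f :: nat \<Rightarrow> nat \<times> (nat \<Rightarrow> 'b).
        f 0 = init_state scale val x B0 \<and> (\<forall>n. proc_step scale val x r (f n) (f (Suc n))))"
proof
  assume "\<exists>f :: nat \<Rightarrow> nat \<times> (nat \<Rightarrow> 'b).
        f 0 = init_state scale val x B0 \<and> (\<forall>n. proc_step scale val x r (f n) (f (Suc n)))"
  then obtain f :: "nat \<Rightarrow> nat \<times> (nat \<Rightarrow> 'b)" where f0: "f 0 = init_state scale val x B0"
    and fs: "\<And>n. proc_step scale val x r (f n) (f (Suc n))" by blast
  have r1: "1 \<le> r"
  proof (rule ccontr)
    assume "\<not> 1 \<le> r"
    then show False using fs[of 0] f0
      by (cases "f (Suc 0)") (auto simp: init_state_def proc_step_def)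
  qed
  have inv: "Inv (fst (f n)) (snd (f n))" for n
  proof (induction n)
    case 0 then show ?case using f0 Inv_init[OF r1] by (simp add: init_state_def)
  next
    case (Suc n)
    show ?case
      using Inv_step[OF Suc.IH, of "fst (f (Suc n))" "snd (f (Suc n))"] fs[of n] by simp
  qed
  have dstep: "fst (f (Suc n)) = fst (f n) \<or> fst (f (Suc n)) = Suc (fst (f n))" for n
    using fs[of n] by (cases "f n"; cases "f (Suc n)") (auto simp: proc_step_def)
  have dle: "fst (f n) \<le> r" for n using inv[of n] by (simp add: Inv_def)
  define D where "D = Max (range (\<lambda>n. fst (f n)))"
  have finR: "finite (range (\<lambda>n. fst (f n)))"
    by (rule finite_subset[of _ "{..r}"]) (use dle in auto)
  have "D \<in> range (\<lambda>n. fst (f n))" unfolding D_def by (rule Max_in[OF finR]) auto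
  then obtain N where N: "fst (f N) = D" by auto
  have geN: "fst (f N) \<le> fst (f (N + k))" for k
  proof (induction k)
    case (Suc k) then show ?case using dstep[of "N + k"] by auto
  qed simp
  have dconst: "fst (f (N + k)) = D" for k
    using geN[of k] N Max_ge[OF finR, of "fst (f (N + k))"] unfolding D_def by auto
  define Bn where "Bn k = snd (f (N + k))" for k
  have fN: "f (N + k) = (D, Bn k)" for k using dconst[of k] by (simp add: Bn_def prod_eq_iff)
  have invk: "Inv D (Bn k)" for k using inv[of "N + k"] fN[of k] by simp
  have "\<exists>\<alpha>. ext_pos val (comb scale (Bn k) D \<alpha>) \<and>
          Bn (Suc k) = (Bn k)(D := inverse x *s comb scale (Bn k) D \<alpha>)" for k
    using fs[of "N + k"] fN[of k] fN[of "Suc k"] by (auto simp: proc_step_def)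
  then obtain \<alpha> where \<alpha>: "\<And>k. ext_pos val (comb scale (Bn k) D (\<alpha> k))"
    "\<And>k. Bn (Suc k) = (Bn k)(D := inverse x *s comb scale (Bn k) D (\<alpha> k))"
    by metis
  define P where "P = Bn 0"
  have agree: "Bn k i = P i" if "i \<noteq> D" for k i
    using that by (induction k) (simp_all add: P_def \<alpha>(2))
  have ID: "Inv D P" using invk by (simp add: P_def)
  have D1: "1 \<le> D" "D \<le> r" using ID by (auto simp: Inv_def)
  define v where "v k = (\<Sum>i\<in>{1..<D}. \<alpha> k i *s P i)" for k
  have comb_eq: "comb scale (Bn k) D (\<alpha> k) = v k + Bn k D" for k
    unfolding comb_def v_def using agree by (auto intro!: sum.cong)
  define w where "w k = x ^ k *s Bn k D" for k
  have w_step: "w (Suc k) = x ^ k *s v k + w k" for k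
  proof -
    have "w (Suc k) = x ^ Suc k *s (inverse x *s comb scale (Bn k) D (\<alpha> k))"
      by (simp add: w_def \<alpha>(2))
    also have "\<dots> = x ^ k *s comb scale (Bn k) D (\<alpha> k)"
      using x0 by (simp add: mult.assoc)
    finally show ?thesis by (simp add: comb_eq w_def scale_right_distrib)
  qed
  have w_null: "ext_ge val (int k) (w k)" for k
  proof -
    have "ext_ge val 0 (Bn k D)" using invk[of k] D1 by (simp add: Inv_def)
    moreover have "ext_ge \<nu> (int k) (x ^ k)" by (simp add: ext_ge_def nu_power)
    ultimately show ?thesis using ext_ge_scale unfolding w_def by fastforce
  qed
  have v_ge: "ext_ge val 0 (v k)" for k
  proof -
    have "ext_ge val 1 (comb scale (Bn k) D (\<alpha> k))" using \<alpha>(1) by (simp add: ext_pos_iff)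
    then have "ext_ge val 0 (comb scale (Bn k) D (\<alpha> k))" by (rule ext_ge_mono[rotated]) simp
    moreover have "ext_ge val 0 (Bn k D)" using invk[of k] D1 by (simp add: Inv_def)
    ultimately have "ext_ge val 0 (comb scale (Bn k) D (\<alpha> k) - Bn k D)" by (rule ext_ge_diff_val)
    then show ?thesis by (simp add: comb_eq)
  qed
  have alpha_ok: "ext_ge \<nu> 0 (\<alpha> k i)" if "i \<in> {1..<D}" for k i
    by (rule ortho[where B = P and d = D]) (use ID v_ge[of k] that in \<open>auto simp: Inv_def v_def\<close>)
  define K where "K = Min (insert 0 ((\<lambda>(i, j). \<nu> (coord j (P i))) ` ({1..<D} \<times> {1..r})))"
  have K: "ext_ge \<nu> K (coord j (P i))" if "i \<in> {1..<D}" "j \<in> {1..r}" for i j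
  proof -
    have "K \<le> \<nu> (coord j (P i))" unfolding K_def
      by (rule Min_le) (use that in auto)
    then show ?thesis by (simp add: ext_ge_def)
  qed
  have cstep: "coord j (w (Suc k)) - coord j (w k) = x ^ k * (\<Sum>i\<in>{1..<D}. \<alpha> k i * coord j (P i))" for j k
    by (simp add: w_step coord_add coord_scale v_def coord_sum)
  have cauchy: "cauchy_seq \<nu> (\<lambda>k. coord j (w k))" if j: "j \<in> {1..r}" for j
  proof (rule cauchy_from_steps[OF nu_ultra ext_ge_neg_nu])
    fix k
    have "ext_ge \<nu> (0 + K) (\<Sum>i\<in>{1..<D}. \<alpha> k i * coord j (P i))"
      by (rule ext_ge_sum_nu) (use alpha_ok K j ext_ge_mult in blast)
    with ext_ge_mult[of "int k" "x ^ k"] have "ext_ge \<nu> (int k + (0 + K)) (x ^ k * (\<Sum>i\<in>{1..<D}. \<alpha> k i * coord j (P i)))"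
      by (simp add: ext_ge_def nu_power)
    then show "ext_ge \<nu> (int k + K) (coord j (w (Suc k)) - coord j (w k))" by (simp add: cstep)
  qed
  have cD: "coord D (w k) = coord D (P D)" for k
  proof (induction k)
    case 0 then show ?case by (simp add: w_def P_def)
  next
    case (Suc k)
    have "coord D (P i) = 0" if "i \<in> {1..<D}" for i using ID that D1 by (auto simp: Inv_def)
    then have "coord D (w (Suc k)) - coord D (w k) = 0" by (simp add: cstep)
    then show ?case using Suc by simp
  qed
  have nonz: "coord D (P D) \<noteq> 0" using ID by (simp add: Inv_def)
  have nullw: "null_seq val (\<lambda>k. \<Sum>j\<in>{1..r}. coord j (w k) *s B0 j)"
    unfolding expand null_seq_def
  proof
    fix M
    show "\<exists>N. \<forall>n\<ge>N. ext_ge val M (w n)"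
    proof (intro exI allI impI)
      fix n assume "nat M \<le> n"
      then have "M \<le> int n" by linarith
      then show "ext_ge val M (w n)" using w_null[of n] ext_ge_mono by blast
    qed
  qed
  have "\<forall>i\<in>{1..r}. null_seq \<nu> (\<lambda>k. coord i (w k))"
    using full[unfolded completion_full_dim_def, rule_format, of "\<lambda>j k. coord j (w k)"] cauchy nullw
    by blast
  then have "null_seq \<nu> (\<lambda>k. coord D (w k))" using D1 by auto
  then obtain M where "ext_ge \<nu> (\<nu> (coord D (P D)) + 1) (coord D (w M))"
    unfolding null_seq_def by blast
  then show False using nonz by (simp add: cD ext_ge_def)
qed

end

theorem mainTheorem3:
  fixes scale :: "'a::field_char_0 \<Rightarrow> 'v::ab_group_add \<Rightarrow> 'v"
    and \<nu> :: "'a \<Rightarrow> int" and val :: "'v \<Rightarrow> int"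
    and r :: nat and B :: "nat \<Rightarrow> 'v" and x :: 'a
  assumes "vector_space scale"
    and "is_valuation \<nu>"
    and "is_value_function scale \<nu> val"
    and "vector_space.dim scale UNIV = r"
    and "inj_on B {1..r}"
    and "\<not> module.dependent scale (B ` {1..r})"
    and "module.span scale (B ` {1..r}) = UNIV"
    and "x \<noteq> 0" and "\<nu> x = 1"
    and "completion_full_dim scale \<nu> val r B"
  shows "\<not> (\<exists>f :: nat \<Rightarrow> nat \<times> (nat \<Rightarrow> 'v).
             f 0 = init_state scale val x B \<and> (\<forall>n. proc_step scale val x r (f n) (f (Suc n))))"
proof -
  interpret S: setting scale \<nu> val r B x
    using assms by (simp add: setting_def setting_axioms_def)
  show ?thesis by (rule S.no_infinite_run)
qed

end
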